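(* (i) For every $L>0$, $\Delta\mapsto\mathrm P_\Delta(\hat\tau_{\rm ST}-\tau\le L(1+\gamma)^{-1/2}\sigma_0)$ is monotonically decreasing in $\Delta$. (ii) For every $t\in\mathbb R$ and $L$, with $c=c_{\alpha/2}$, \begin{align*} &\mathrm P_{\Delta/\sigma_0=t}\big(\hat\tau_{\rm ST}-\tau\le L(1+\gamma)^{-1/2}\sigma_0\big)\\ ={}&\Big[\Phi\big(c-\sqrt{\tfrac{\gamma}{1+\gamma}}t\big)-\Phi\big(-c-\sqrt{\tfrac{\gamma}{1+\gamma}}t\big)\Big]\Phi\big(L-\tfrac{\gamma}{\sqrt{1+\gamma}}t\big)\\ &+\int_{-\infty}^{-c-\sqrt{\frac{\gamma}{1+\gamma}}t}\Phi(L+\sqrt\gamma(u+c))\phi(u)\,du+\int_{c-\sqrt{\frac{\gamma}{1+\gamma}}t}^{\infty}\Phi(L+\sqrt\gamma(u-c))\phi(u)\,du. \end{align*} (iii) Let $\hat L'_{\rm ST}$ be the solution in $L$ of $\mathrm P_{\Delta/\sigma_0=b}\big(\hat\tau_{\rm ST}-\tau\le L(1+\gamma)^{-1/2}\sigma_0\big)=1-\zeta$. Then $[\hat\tau_{\rm ST}-\hat L'_{\rm ST}(1+\gamma)^{-1/2}\sigma_0,\infty)$ is the shortest lower confidence bound of this form with coverage at least $1-\zeta$ uniformly over $|\Delta/\sigma_0|\le b$.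
   Context: Let $\tau\in\mathbb R$ be an unknown parameter and $\Delta\in\mathbb R$ an unknown bias. Let $\sigma_0,\sigma_1>0$ be known. We observe independent random variables $\hat\tau_0\sim N(\tau,\sigma_0^2)$ and $\hat\tau_1\sim N(\tau+\Delta,\sigma_1^2)$. Define $\gamma=\sigma_0^2/\sigma_1^2$ and $\sigma=\sqrt{\sigma_0^2+\sigma_1^2}$. Write $\Phi$ and $\phi$ for the standard normal CDF and density. For $a\in(0,1)$, let $c_a=\Phi^{-1}(1-a)$. Fix $\alpha,\zeta\in(0,1)$ and $b\ge0$. The soft-thresholding estimator is \[ \hat\tau_{\rm ST}=\hat\tau_0+\frac{\gamma}{1+\gamma}(\hat\tau_1-\hat\tau_0)\mathbf 1(|\hat\tau_1-\hat\tau_0|\le\sigma c_{\alpha/2})+\frac{\gamma}{1+\gamma}\sigma c_{\alpha/2}\,\mathrm{sign}(\hat\tau_1-\hat\tau_0)\mathbf 1(|\hat\tau_1-\hat\tau_0|>\sigma c_{\alpha/2}). \] $\mathrm P_\Delta$ denotes probability under bias $\Delta$, and $\mathrm P_{\Delta/\sigma_0=t}$ means probability under $\Delta=t\sigma_0$. *)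

theory Defs
  imports "HOL-Probability.Probability"
begin

definition phi :: "real \<Rightarrow> real" where
  "phi x = std_normal_density x"

definition Phi :: "real \<Rightarrow> real" where
  "Phi x = measure (density lborel std_normal_density) {..x}"

definition cq :: "real \<Rightarrow> real" where
  "cq a = (THE c. Phi c = 1 - a)"

definition tau_ST :: "real \<Rightarrow> real \<Rightarrow> real \<Rightarrow> real \<Rightarrow> real \<Rightarrow> real" where
  "tau_ST s0 s1 \<alpha> x0 x1 =
     (let \<gamma> = s0\<^sup>2 / s1\<^sup>2; \<sigma> = sqrt (s0\<^sup>2 + s1\<^sup>2); c = cq (\<alpha> / 2); d = x1 - x0 in
      x0 + \<gamma> / (1 + \<gamma>) * d * (if \<bar>d\<bar> \<le> \<sigma> * c then 1 else 0)
         + \<gamma> / (1 + \<gamma>) * \<sigma> * c * sgn d * (if \<bar>d\<bar> > \<sigma> * c then 1 else 0))"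

text \<open>Joint law of independent (tau0hat, tau1hat) with tau0hat ~ N(tau, s0^2),
  tau1hat ~ N(tau + Delta, s1^2).\<close>
definition obs_law :: "real \<Rightarrow> real \<Rightarrow> real \<Rightarrow> real \<Rightarrow> (real \<times> real) measure" where
  "obs_law s0 s1 \<tau> \<Delta> =
     density lborel (normal_density \<tau> s0) \<Otimes>\<^sub>M density lborel (normal_density (\<tau> + \<Delta>) s1)"

definition cover_prob :: "real \<Rightarrow> real \<Rightarrow> real \<Rightarrow> real \<Rightarrow> real \<Rightarrow> real \<Rightarrow> real" where
  "cover_prob s0 s1 \<alpha> \<tau> \<Delta> L =
     measure (obs_law s0 s1 \<tau> \<Delta>)
       {p. tau_ST s0 s1 \<alpha> (fst p) (snd p) - \<tau> \<le> L * s0 / sqrt (1 + s0\<^sup>2 / s1\<^sup>2)}"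

end

theory Submission
  imports Defs
begin


abbreviation "SND \<equiv> density lborel std_normal_density"

lemma prob_SND: "prob_space SND"
  using prob_space_normal_density by simp

lemma real_dist_SND: "real_distribution SND"
  using real_dist_normal_dist by simp

lemma Phi_cdf: "Phi = cdf SND"
  by (auto simp: Phi_def cdf_def)

lemma sets_SND[simp]: "sets SND = sets borel" by simp

lemma Phi_nonneg: "0 \<le> Phi x"
  by (simp add: Phi_def)

lemma Phi_le1: "Phi x \<le> 1"
  using real_distribution.cdf_bounded_prob[OF real_dist_SND] by (simp add: Phi_cdf)

lemma Phi_mono: "x \<le> y \<Longrightarrow> Phi x \<le> Phi y"
  using real_distribution.finite_borel_measure_M[OF real_dist_SND]
  by (simp add: Phi_cdf finite_borel_measure.cdf_nondecreasing)

lemma Phi_top: "(Phi \<longlongrightarrow> 1) at_top"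
  using real_distribution.cdf_lim_at_top_prob[OF real_dist_SND] by (simp add: Phi_cdf)

lemma Phi_bot: "(Phi \<longlongrightarrow> 0) at_bot"
  using real_distribution.finite_borel_measure_M[OF real_dist_SND] finite_borel_measure.cdf_lim_at_bot by (simp add: Phi_cdf)

lemma emeasure_SND: "emeasure SND A = ennreal (measure SND A)"
proof -
  interpret prob_space SND by (rule prob_SND)
  show ?thesis by (simp add: emeasure_eq_measure)
qed

lemma Phi_emeasure: "emeasure SND {..x} = ennreal (Phi x)"
  by (simp add: emeasure_SND Phi_def)

lemma std_normal_density_le1: "std_normal_density x \<le> 1"
proof -
  have "exp (- x\<^sup>2 / 2) \<le> 1" by simp
  moreover have "1 / sqrt (2 * pi) \<le> 1"
    using pi_gt3 by (simp add: divide_le_eq_1 real_le_rsqrt)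
  ultimately show ?thesis unfolding std_normal_density_def
    by (metis exp_gt_zero less_eq_real_def mult_le_one)
qed

lemma std_normal_density_pos: "0 < std_normal_density x"
  by (simp add: normal_density_pos)

lemma std_normal_density_anti: "\<bar>x\<bar> \<le> \<bar>y\<bar> \<Longrightarrow> std_normal_density y \<le> std_normal_density x"
  unfolding std_normal_density_def
  by (auto intro!: mult_left_mono simp: divide_le_cancel abs_le_square_iff)

lemma Phi_diff: "x \<le> y \<Longrightarrow> Phi y - Phi x = measure SND {x<..y}"
  using real_distribution.finite_borel_measure_M[OF real_dist_SND]
  by (cases "x = y") (simp_all add: Phi_cdf finite_borel_measure.cdf_diff_eq)

lemma emeasure_SND_ioc: "emeasure SND {x<..y} = (\<integral>\<^sup>+t. ennreal (std_normal_density t) * indicator {x<..y} t \<partial>lborel)"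
  by (subst emeasure_density) (auto intro!: nn_integral_cong simp: indicator_def)

lemma Phi_lip_aux: assumes "x \<le> y" shows "Phi y - Phi x \<le> y - x"
proof -
  have "ennreal (Phi y - Phi x) = emeasure SND {x<..y}"
    using Phi_diff[OF assms] emeasure_SND by simp
  also have "\<dots> \<le> (\<integral>\<^sup>+t. indicator {x<..y} t \<partial>lborel)"
    unfolding emeasure_SND_ioc
    by (intro nn_integral_mono) (auto simp: indicator_def std_normal_density_le1)
  also have "\<dots> = ennreal (y - x)" using assms by simp
  finally show ?thesis using assms by (simp add: ennreal_le_iff)
qed

lemma Phi_strict_aux: assumes "x < y" shows "Phi x < Phi y"
proof -
  define m where "m = std_normal_density (\<bar>x\<bar> + \<bar>y\<bar>)"
  have m: "m > 0" unfolding m_def by (rule std_normal_density_pos)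
  have "ennreal (m * (y - x)) = (\<integral>\<^sup>+t. ennreal m * indicator {x<..y} t \<partial>lborel)"
    using assms m by (simp add: nn_integral_cmult ennreal_mult)
  also have "\<dots> \<le> emeasure SND {x<..y}"
    unfolding emeasure_SND_ioc
    by (intro nn_integral_mono) (auto simp: indicator_def m_def intro!: std_normal_density_anti)
  also have "\<dots> = ennreal (Phi y - Phi x)"
    using Phi_diff[of x y] assms emeasure_SND by simp
  finally have "m * (y - x) \<le> Phi y - Phi x"
    using assms Phi_mono[of x y] by (simp add: ennreal_le_iff)
  moreover have "m * (y - x) > 0" using m assms by simp
  ultimately show ?thesis by simp
qed

lemma Phi_lip: "\<bar>Phi y - Phi x\<bar> \<le> \<bar>y - x\<bar>"
proof (cases "x \<le> y")
  case True
  then show ?thesis using Phi_lip_aux[of x y] Phi_mono[of x y] by linarith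
next
  case False
  then show ?thesis using Phi_lip_aux[of y x] Phi_mono[of y x] by linarith
qed

lemma Phi_cont: "isCont Phi x"
  unfolding isCont_def
proof (rule LIM_I)
  fix e :: real assume e: "0 < e"
  show "\<exists>d>0. \<forall>y. y \<noteq> x \<and> norm (y - x) < d \<longrightarrow> norm (Phi y - Phi x) < e"
  proof (intro exI conjI allI impI)
    show "0 < e" by (rule e)
    fix y assume "y \<noteq> x \<and> norm (y - x) < e"
    then show "norm (Phi y - Phi x) < e" using Phi_lip[of y x] by simp
  qed
qed

lemma Phi_strict: "x < y \<Longrightarrow> Phi x < Phi y" by (rule Phi_strict_aux)

lemma Phi_less_iff: "Phi x < Phi y \<longleftrightarrow> x < y"
  using Phi_strict Phi_mono by (meson not_le)

lemma Phi_inj: "Phi x = Phi y \<longleftrightarrow> x = y"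
  using Phi_strict by (metis less_irrefl linorder_neqE_linordered_idom)



lemma Phi_sym: "Phi (- x) = 1 - Phi x"
proof -
  interpret fb: finite_borel_measure SND
    using real_distribution.finite_borel_measure_M[OF real_dist_SND] .
  interpret ps: prob_space SND by (rule prob_SND)
  have single: "measure SND {y} = 0" for y
    using fb.isCont_cdf[of y] Phi_cont[of y] by (simp add: Phi_cdf)
  have "emeasure SND {x<..} = (\<integral>\<^sup>+t. ennreal (std_normal_density t) * indicator {x<..} t \<partial>lborel)"
    by (subst emeasure_density) (auto intro!: nn_integral_cong simp: indicator_def)
  also have "\<dots> = (\<integral>\<^sup>+t. ennreal (std_normal_density (0 + (-1) * t)) * indicator {x<..} (0 + (-1) * t) \<partial>lborel)"
    by (subst nn_integral_real_affine[where c="-1" and t=0]) auto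
  also have "\<dots> = (\<integral>\<^sup>+t. ennreal (std_normal_density t) * indicator {..<-x} t \<partial>lborel)"
    by (intro nn_integral_cong) (auto simp: std_normal_density_def indicator_def)
  also have "\<dots> = emeasure SND {..<-x}"
    by (subst emeasure_density) (auto intro!: nn_integral_cong simp: indicator_def)
  finally have "measure SND {x<..} = measure SND {..<-x}"
    by (simp add: emeasure_SND)
  moreover have "measure SND {..-x} = measure SND {..<-x} + measure SND {-x}"
  proof -
    have u1: "{..-x} = {..<-x} \<union> {-x}" by auto
    show ?thesis unfolding u1 by (rule fb.finite_measure_Union) auto
  qed
  moreover have "measure SND {..x} + measure SND {x<..} = 1"
  proof -
    have u2: "space SND = {..x} \<union> {x<..}" by auto
    have "measure SND (space SND) = 1" by (rule ps.prob_space)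
    then show ?thesis unfolding u2 by (subst (asm) fb.finite_measure_Union) auto
  qed
  ultimately show ?thesis using single[of "-x"] by (simp add: Phi_def)
qed

lemma Phi_zero: "Phi 0 = 1/2"
  using Phi_sym[of 0] by simp

lemma cq_props:
  assumes "0 < a" "a < 1/2"
  shows "Phi (cq a) = 1 - a" "cq a > 0"
proof -
  have "\<forall>\<^sub>F x in at_top. 1 - a < Phi x"
    using order_tendstoD(1)[OF Phi_top] assms by simp
  then obtain R where R: "\<And>x. x \<ge> R \<Longrightarrow> 1 - a < Phi x"
    by (auto simp: eventually_at_top_linorder)
  define R' where "R' = max R 0"
  have "Phi 0 \<le> 1 - a" using assms Phi_zero by simp
  moreover have "1 - a \<le> Phi R'" using R[of R'] by (simp add: R'_def)
  moreover have "0 \<le> R'" by (simp add: R'_def)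
  ultimately have "\<exists>x. 0 \<le> x \<and> x \<le> R' \<and> Phi x = 1 - a"
    using Phi_cont by (intro IVT) auto
  then obtain x where x: "Phi x = 1 - a" by blast
  have ex1: "\<exists>!c. Phi c = 1 - a"
  proof (rule ex1I[of _ x])
    show "Phi x = 1 - a" by (rule x)
    fix y assume "Phi y = 1 - a"
    then show "y = x" using x Phi_inj[of y x] by simp
  qed
  have "Phi (cq a) = 1 - a" unfolding cq_def using theI'[OF ex1] .
  then show "Phi (cq a) = 1 - a" .
  then have "Phi 0 < Phi (cq a)" using assms Phi_zero by simp
  then show "cq a > 0" by (simp add: Phi_less_iff)
qed

lemma exq:
  fixes A B e f :: real assumes "A > 0" "B > 0"
  shows "-e\<^sup>2 / (2 * A) + -(e + f)\<^sup>2 / (2 * B) = -f\<^sup>2 / (2 * (A + B)) + -(e + A / (A + B) * f)\<^sup>2 / (2 * (A * B / (A + B)))"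
proof -
  have nz: "A \<noteq> 0" "B \<noteq> 0" "A + B \<noteq> 0" using assms by auto
  have l: "-e\<^sup>2 / (2 * A) + -(e + f)\<^sup>2 / (2 * B) = (-(B*e\<^sup>2) - A*(e+f)\<^sup>2) / (2*A*B)"
    using nz by (simp add: field_simps)
  have r1: "-(e + A / (A + B) * f)\<^sup>2 / (2 * (A * B / (A + B))) = - ((A+B)*e + A*f)\<^sup>2 / (2*A*B*(A+B))"
  proof -
    have "e + A / (A + B) * f = ((A+B)*e + A*f) / (A+B)" using nz by (simp add: field_simps)
    then have "(e + A / (A + B) * f)\<^sup>2 = ((A+B)*e + A*f)\<^sup>2 / (A+B)\<^sup>2" by (simp add: power_divide)
    moreover have "X / (A+B)\<^sup>2 / (2 * (A * B / (A + B))) = X / (2*A*B*(A+B))" for X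
      using nz by (simp add: power2_eq_square)
    ultimately show ?thesis by (metis minus_divide_left)
  qed
  have r2: "-f\<^sup>2 / (2 * (A + B)) = -(A*B*f\<^sup>2) / (2*A*B*(A+B))"
    using nz by simp
  have l2: "(-(B*e\<^sup>2) - A*(e+f)\<^sup>2) / (2*A*B) = (-(B*e\<^sup>2) - A*(e+f)\<^sup>2)*(A+B) / (2*A*B*(A+B))"
    using nz by simp
  have n: "(-(B*e\<^sup>2) - A*(e+f)\<^sup>2)*(A+B) = -(A*B*f\<^sup>2) + - ((A+B)*e + A*f)\<^sup>2"
    by (simp add: power2_eq_square algebra_simps)
  show ?thesis unfolding l r1 r2 l2 n by (simp only: add_divide_distrib)
qed

definition clipf :: "real \<Rightarrow> real \<Rightarrow> real" where
  "clipf r d = (if \<bar>d\<bar> \<le> r then d else r * sgn d)"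

lemma clipf_measurable[measurable]: "clipf r \<in> borel_measurable borel"
  unfolding clipf_def by measurable

lemma clipf_mono: "0 \<le> r \<Longrightarrow> d \<le> e \<Longrightarrow> clipf r d \<le> clipf r e"
  unfolding clipf_def by (auto simp: sgn_if abs_if)

lemma tau_ST_eq:
  "tau_ST s0 s1 \<alpha> x0 x1 = x0 + (s0\<^sup>2 / s1\<^sup>2) / (1 + s0\<^sup>2 / s1\<^sup>2) * clipf (sqrt (s0\<^sup>2 + s1\<^sup>2) * cq (\<alpha> / 2)) (x1 - x0)"
  unfolding tau_ST_def clipf_def Let_def by auto

lemma nd_affine_pt:
  assumes "s > 0"
  shows "normal_density m s (m + s * u) = std_normal_density u / s"
  using assms unfolding normal_density_def
  by (simp add: real_sqrt_mult power_mult_distrib field_simps)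

lemma nn_normal_affine:
  assumes s: "s > 0" and g[measurable]: "g \<in> borel_measurable borel"
  shows "(\<integral>\<^sup>+x. ennreal (normal_density m s x) * g x \<partial>lborel)
       = (\<integral>\<^sup>+u. ennreal (std_normal_density u) * g (m + s * u) \<partial>lborel)"
proof -
  have "(\<integral>\<^sup>+x. ennreal (normal_density m s x) * g x \<partial>lborel)
      = ennreal s * (\<integral>\<^sup>+u. ennreal (normal_density m s (m + s * u)) * g (m + s * u) \<partial>lborel)"
    using nn_integral_real_affine[where c=s and t=m and f="\<lambda>x. ennreal (normal_density m s x) * g x"] s
    by simp
  also have "\<dots> = (\<integral>\<^sup>+u. ennreal s * (ennreal (std_normal_density u / s) * g (m + s * u)) \<partial>lborel)"
    by (subst nn_integral_cmult) (auto simp: nd_affine_pt[OF s])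
  also have "\<dots> = (\<integral>\<^sup>+u. ennreal (std_normal_density u) * g (m + s * u) \<partial>lborel)"
    using s by (intro nn_integral_cong) (simp add: ennreal_mult'[symmetric] mult.assoc[symmetric])
  finally show ?thesis .
qed

lemma rearr: "((a::real) * exp x) * (b * exp y) = (a * b) * exp (x + y)"
  by (simp only: exp_add) (simp add: mult_ac del: mult_exp_exp)

lemma nd_factor:
  assumes s0: "s0 > 0" and s1: "s1 > 0"
  defines "\<sigma> \<equiv> sqrt (s0\<^sup>2 + s1\<^sup>2)"
  shows "normal_density \<tau> s0 x * normal_density (\<tau> + \<Delta>) s1 (x + d)
       = normal_density \<Delta> \<sigma> d * normal_density (\<tau> - s0\<^sup>2 / (s0\<^sup>2 + s1\<^sup>2) * (d - \<Delta>)) (s0 * s1 / \<sigma>) x"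
proof -
  have S: "\<sigma>\<^sup>2 = s0\<^sup>2 + s1\<^sup>2" unfolding \<sigma>_def by simp
  have sp: "\<sigma> > 0" unfolding \<sigma>_def using s0 by (simp add: add_pos_nonneg)
  have pre: "1 / sqrt (2 * pi * s0\<^sup>2) * (1 / sqrt (2 * pi * s1\<^sup>2))
      = 1 / sqrt (2 * pi * \<sigma>\<^sup>2) * (1 / sqrt (2 * pi * (s0 * s1 / \<sigma>)\<^sup>2))"
  proof -
    have q: "sqrt (2 * pi * y\<^sup>2) = sqrt (2 * pi) * \<bar>y\<bar>" for y
      by (simp add: real_sqrt_mult)
    have p: "sqrt (2 * pi) > 0" by simp
    have ab: "\<bar>s0 * s1 / \<sigma>\<bar> = s0 * s1 / \<sigma>" using s0 s1 sp by simp
    show ?thesis unfolding q ab using s0 s1 sp p by (simp add: field_simps)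
  qed
  have ex: "-(x - \<tau>)\<^sup>2 / (2 * s0\<^sup>2) + -(x + d - (\<tau> + \<Delta>))\<^sup>2 / (2 * s1\<^sup>2)
      = -(d - \<Delta>)\<^sup>2 / (2 * \<sigma>\<^sup>2) + -(x - (\<tau> - s0\<^sup>2 / (s0\<^sup>2 + s1\<^sup>2) * (d - \<Delta>)))\<^sup>2 / (2 * (s0 * s1 / \<sigma>)\<^sup>2)"
  proof -
    have e1: "x + d - (\<tau> + \<Delta>) = (x - \<tau>) + (d - \<Delta>)" by simp
    have e2: "x - (\<tau> - s0\<^sup>2 / (s0\<^sup>2 + s1\<^sup>2) * (d - \<Delta>)) = (x - \<tau>) + s0\<^sup>2 / (s0\<^sup>2 + s1\<^sup>2) * (d - \<Delta>)" by simp
    have e3: "(s0 * s1 / \<sigma>)\<^sup>2 = s0\<^sup>2 * s1\<^sup>2 / (s0\<^sup>2 + s1\<^sup>2)"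
      by (simp add: power_divide power_mult_distrib S)
    show ?thesis unfolding e1 e2 e3 S using s0 s1 by (intro exq) auto
  qed
  show ?thesis
    unfolding normal_density_def rearr pre ex ..
qed



lemma Phi_measurable[measurable]: "Phi \<in> borel_measurable borel"
  by (rule borel_measurable_mono) (simp add: mono_def Phi_mono)

lemma inner_x:
  assumes v: "v > 0"
  shows "(\<integral>\<^sup>+x. ennreal (normal_density m v x) * indicator {..B} x \<partial>lborel) = ennreal (Phi ((B - m) / v))"
proof -
  have "(\<integral>\<^sup>+x. ennreal (normal_density m v x) * indicator {..B} x \<partial>lborel)
      = (\<integral>\<^sup>+u. ennreal (std_normal_density u) * indicator {..B} (m + v * u) \<partial>lborel)"
    by (rule nn_normal_affine[OF v]) simp
  also have "\<dots> = (\<integral>\<^sup>+u. ennreal (std_normal_density u) * indicator {..(B - m) / v} u \<partial>lborel)"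
    using v by (intro nn_integral_cong) (auto simp: indicator_def field_simps)
  also have "\<dots> = emeasure SND {..(B - m) / v}"
    by (subst emeasure_density) auto
  also have "\<dots> = ennreal (Phi ((B - m) / v))" by (rule Phi_emeasure)
  finally show ?thesis .
qed

lemma cover_repr_nn:
  fixes s0 s1 \<alpha> \<tau> \<Delta> L :: real
  assumes s0: "s0 > 0" and s1: "s1 > 0"
  defines "\<sigma> \<equiv> sqrt (s0\<^sup>2 + s1\<^sup>2)"
  defines "r \<equiv> sqrt (s0\<^sup>2 + s1\<^sup>2) * cq (\<alpha> / 2)"
  defines "w \<equiv> s0\<^sup>2 / (s0\<^sup>2 + s1\<^sup>2)"
  defines "K \<equiv> L * s0 / sqrt (1 + s0\<^sup>2 / s1\<^sup>2)"
  shows "emeasure (obs_law s0 s1 \<tau> \<Delta>) {p. tau_ST s0 s1 \<alpha> (fst p) (snd p) - \<tau> \<le> K}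
    = (\<integral>\<^sup>+d. ennreal (normal_density \<Delta> \<sigma> d)
          * ennreal (Phi ((K + \<tau> - w * clipf r d - (\<tau> - w * (d - \<Delta>))) / (s0 * s1 / \<sigma>))) \<partial>lborel)"
proof -
  define n0 where "n0 = normal_density \<tau> s0"
  define n1 where "n1 = normal_density (\<tau> + \<Delta>) s1"
  define M0 where "M0 = density lborel n0"
  define M1 where "M1 = density lborel n1"
  have sp: "\<sigma> > 0" unfolding \<sigma>_def using s0 by (simp add: add_pos_nonneg)
  have w_eq: "(s0\<^sup>2 / s1\<^sup>2) / (1 + s0\<^sup>2 / s1\<^sup>2) = w"
    unfolding w_def using s1 by (simp add: field_simps)
  define S where "S = {p :: real \<times> real. fst p + w * clipf r (snd p - fst p) - \<tau> \<le> K}"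
  have S_eq: "{p. tau_ST s0 s1 \<alpha> (fst p) (snd p) - \<tau> \<le> K} = S"
    unfolding S_def tau_ST_eq w_eq r_def by simp
  have S_meas[measurable]: "S \<in> sets (borel \<Otimes>\<^sub>M borel)"
  proof -
    have "{p \<in> space (borel \<Otimes>\<^sub>M borel). fst p + w * clipf r (snd p - fst p) - \<tau> \<le> K} \<in> sets (borel \<Otimes>\<^sub>M borel)"
      by measurable
    then show ?thesis unfolding S_def by (simp add: space_pair_measure)
  qed
  interpret M1: prob_space M1 unfolding M1_def n1_def using s1 by (rule prob_space_normal_density)
  interpret M0: prob_space M0 unfolding M0_def n0_def using s0 by (rule prob_space_normal_density)
  interpret P: pair_sigma_finite M0 M1 ..
  have sets_eq: "sets (M0 \<Otimes>\<^sub>M M1) = sets (borel \<Otimes>\<^sub>M borel)"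
    unfolding M0_def M1_def by (intro sets_pair_measure_cong) auto
  have law: "obs_law s0 s1 \<tau> \<Delta> = M0 \<Otimes>\<^sub>M M1"
    unfolding obs_law_def M0_def M1_def n0_def n1_def ..
  have "emeasure (M0 \<Otimes>\<^sub>M M1) S = (\<integral>\<^sup>+p. indicator S p \<partial>(M0 \<Otimes>\<^sub>M M1))"
    using sets_eq S_meas by simp
  also have "\<dots> = (\<integral>\<^sup>+x. \<integral>\<^sup>+y. indicator S (x, y) \<partial>M1 \<partial>M0)"
    by (rule M1.nn_integral_fst[symmetric]) (simp add: measurable_cong_sets[OF sets_eq refl])
  also have "\<dots> = (\<integral>\<^sup>+x. ennreal (n0 x) * (\<integral>\<^sup>+y. ennreal (n1 y) * indicator S (x, y) \<partial>lborel) \<partial>lborel)"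
    unfolding M0_def M1_def n0_def n1_def
    by (subst nn_integral_density) (auto simp: nn_integral_density)
  also have "\<dots> = (\<integral>\<^sup>+x. ennreal (n0 x) * (\<integral>\<^sup>+d. ennreal (n1 (x + d)) * indicator S (x, x + d) \<partial>lborel) \<partial>lborel)"
  proof (intro nn_integral_cong)
    fix x
    have "(\<lambda>y. ennreal (n1 y) * indicator S (x, y)) \<in> borel_measurable borel"
      unfolding n1_def by measurable
    from nn_integral_real_affine[OF this, where c=1 and t=x]
    show "ennreal (n0 x) * (\<integral>\<^sup>+y. ennreal (n1 y) * indicator S (x, y) \<partial>lborel)
        = ennreal (n0 x) * (\<integral>\<^sup>+d. ennreal (n1 (x + d)) * indicator S (x, x + d) \<partial>lborel)"
      by simp
  qed
  also have "\<dots> = (\<integral>\<^sup>+x. \<integral>\<^sup>+d. ennreal (n0 x) * ennreal (n1 (x + d)) * indicator S (x, x + d) \<partial>lborel \<partial>lborel)"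
    by (intro nn_integral_cong) (simp add: nn_integral_cmult[symmetric] mult.assoc n1_def)
  also have "\<dots> = (\<integral>\<^sup>+d. \<integral>\<^sup>+x. ennreal (n0 x) * ennreal (n1 (x + d)) * indicator S (x, x + d) \<partial>lborel \<partial>lborel)"
    by (rule lborel_pair.Fubini'[symmetric]) (simp add: n0_def n1_def)
  also have "\<dots> = (\<integral>\<^sup>+d. ennreal (normal_density \<Delta> \<sigma> d) *
      (\<integral>\<^sup>+x. ennreal (normal_density (\<tau> - w * (d - \<Delta>)) (s0 * s1 / \<sigma>) x) * indicator {..K + \<tau> - w * clipf r d} x \<partial>lborel) \<partial>lborel)"
  proof (intro nn_integral_cong)
    fix d :: real
    have "ennreal (n0 x) * ennreal (n1 (x + d)) * indicator S (x, x + d)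
        = ennreal (normal_density \<Delta> \<sigma> d) * (ennreal (normal_density (\<tau> - w * (d - \<Delta>)) (s0 * s1 / \<sigma>) x) * indicator {..K + \<tau> - w * clipf r d} x)" for x
    proof -
      have "n0 x * n1 (x + d) = normal_density \<Delta> \<sigma> d * normal_density (\<tau> - w * (d - \<Delta>)) (s0 * s1 / \<sigma>) x"
        unfolding n0_def n1_def \<sigma>_def w_def by (rule nd_factor[OF s0 s1])
      moreover have "indicator S (x, x + d) = (indicator {..K + \<tau> - w * clipf r d} x :: ennreal)"
        unfolding S_def by (auto simp: indicator_def)
      ultimately show ?thesis
        by (metis mult.assoc ennreal_mult normal_density_nonneg n0_def n1_def)
    qed
    then show "(\<integral>\<^sup>+x. ennreal (n0 x) * ennreal (n1 (x + d)) * indicator S (x, x + d) \<partial>lborel)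
      = ennreal (normal_density \<Delta> \<sigma> d) * (\<integral>\<^sup>+x. ennreal (normal_density (\<tau> - w * (d - \<Delta>)) (s0 * s1 / \<sigma>) x) * indicator {..K + \<tau> - w * clipf r d} x \<partial>lborel)"
      by (simp add: nn_integral_cmult)
  qed
  also have "\<dots> = (\<integral>\<^sup>+d. ennreal (normal_density \<Delta> \<sigma> d)
          * ennreal (Phi ((K + \<tau> - w * clipf r d - (\<tau> - w * (d - \<Delta>))) / (s0 * s1 / \<sigma>))) \<partial>lborel)"
    using s0 s1 sp by (intro nn_integral_cong) (simp add: inner_x)
  finally show ?thesis using S_eq law by simp
qed


definition Hf :: "real \<Rightarrow> real \<Rightarrow> real \<Rightarrow> real \<Rightarrow> real \<Rightarrow> real \<Rightarrow> real" where
  "Hf s0 s1 \<alpha> \<Delta> L u = L - s0 / (sqrt (s0\<^sup>2 + s1\<^sup>2) * s1) *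
     (clipf (sqrt (s0\<^sup>2 + s1\<^sup>2) * cq (\<alpha> / 2)) (\<Delta> + sqrt (s0\<^sup>2 + s1\<^sup>2) * u) - sqrt (s0\<^sup>2 + s1\<^sup>2) * u)"

lemma Hf_measurable[measurable]: "Hf s0 s1 \<alpha> \<Delta> L \<in> borel_measurable borel"
  unfolding Hf_def by measurable

lemma integrable_phiPhi:
  assumes [measurable]: "g \<in> borel_measurable borel"
  shows "integrable lborel (\<lambda>u. std_normal_density u * Phi (g u))"
proof (rule Bochner_Integration.integrable_bound[where f=std_normal_density])
  show "integrable lborel std_normal_density" by simp
  show "(\<lambda>u. std_normal_density u * Phi (g u)) \<in> borel_measurable lborel" by measurable
  show "AE x in lborel. norm (std_normal_density x * Phi (g x)) \<le> norm (std_normal_density x)"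
    using Phi_nonneg Phi_le1 by (auto intro!: mult_left_le)
qed

lemma cover_repr:
  fixes s0 s1 \<alpha> \<tau> \<Delta> L :: real
  assumes s0: "s0 > 0" and s1: "s1 > 0"
  shows "cover_prob s0 s1 \<alpha> \<tau> \<Delta> L = (\<integral>u. std_normal_density u * Phi (Hf s0 s1 \<alpha> \<Delta> L u) \<partial>lborel)"
proof -
  define \<sigma> where "\<sigma> = sqrt (s0\<^sup>2 + s1\<^sup>2)"
  define r where "r = sqrt (s0\<^sup>2 + s1\<^sup>2) * cq (\<alpha> / 2)"
  define w where "w = s0\<^sup>2 / (s0\<^sup>2 + s1\<^sup>2)"
  define K where "K = L * s0 / sqrt (1 + s0\<^sup>2 / s1\<^sup>2)"
  have sp: "\<sigma> > 0" unfolding \<sigma>_def using s0 by (simp add: add_pos_nonneg)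
  have sq: "sqrt (1 + s0\<^sup>2 / s1\<^sup>2) = \<sigma> / s1"
  proof -
    have "1 + s0\<^sup>2 / s1\<^sup>2 = (\<sigma> / s1)\<^sup>2" unfolding \<sigma>_def using s1 sp
      by (simp add: power_divide field_simps)
    then show ?thesis using sp s1 by simp
  qed
  define A where "A = (\<lambda>d. (K + \<tau> - w * clipf r d - (\<tau> - w * (d - \<Delta>))) / (s0 * s1 / \<sigma>))"
  have A_meas[measurable]: "A \<in> borel_measurable borel" unfolding A_def by measurable
  have AH: "A (\<Delta> + \<sigma> * u) = Hf s0 s1 \<alpha> \<Delta> L u" for u
  proof -
    have S2: "\<sigma>\<^sup>2 = s0\<^sup>2 + s1\<^sup>2" unfolding \<sigma>_def by simp
    have "A (\<Delta> + \<sigma> * u) = (K - w * (clipf r (\<Delta> + \<sigma> * u) - \<sigma> * u)) * \<sigma> / (s0 * s1)"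
      unfolding A_def using s0 s1 sp by (simp add: field_simps)
    also have "\<dots> = K * \<sigma> / (s0 * s1) - (w * \<sigma> / (s0 * s1)) * (clipf r (\<Delta> + \<sigma> * u) - \<sigma> * u)"
      using s0 s1 by (simp add: field_simps)
    also have "K * \<sigma> / (s0 * s1) = L" unfolding K_def sq using s0 s1 sp by (simp add: field_simps)
    also have "w * \<sigma> / (s0 * s1) = s0 / (\<sigma> * s1)" unfolding w_def S2[symmetric]
      using s0 s1 sp by (simp add: field_simps power2_eq_square)
    finally show ?thesis unfolding Hf_def \<sigma>_def r_def .
  qed
  have "emeasure (obs_law s0 s1 \<tau> \<Delta>) {p. tau_ST s0 s1 \<alpha> (fst p) (snd p) - \<tau> \<le> K}
      = (\<integral>\<^sup>+d. ennreal (normal_density \<Delta> \<sigma> d) * ennreal (Phi (A d)) \<partial>lborel)"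
    unfolding A_def \<sigma>_def r_def w_def K_def by (rule cover_repr_nn[OF s0 s1])
  also have "\<dots> = (\<integral>\<^sup>+u. ennreal (std_normal_density u) * ennreal (Phi (A (\<Delta> + \<sigma> * u))) \<partial>lborel)"
    by (rule nn_normal_affine[OF sp]) measurable
  also have "\<dots> = (\<integral>\<^sup>+u. ennreal (std_normal_density u * Phi (Hf s0 s1 \<alpha> \<Delta> L u)) \<partial>lborel)"
    by (intro nn_integral_cong) (simp add: AH ennreal_mult Phi_nonneg)
  also have "\<dots> = ennreal (\<integral>u. std_normal_density u * Phi (Hf s0 s1 \<alpha> \<Delta> L u) \<partial>lborel)"
    by (rule nn_integral_eq_integral) (auto intro!: integrable_phiPhi simp: Phi_nonneg)
  finally have E: "emeasure (obs_law s0 s1 \<tau> \<Delta>) {p. tau_ST s0 s1 \<alpha> (fst p) (snd p) - \<tau> \<le> K}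
      = ennreal (\<integral>u. std_normal_density u * Phi (Hf s0 s1 \<alpha> \<Delta> L u) \<partial>lborel)" .
  have nn: "0 \<le> (\<integral>u. std_normal_density u * Phi (Hf s0 s1 \<alpha> \<Delta> L u) \<partial>lborel)"
    by (rule Bochner_Integration.integral_nonneg) (simp add: Phi_nonneg)
  show ?thesis unfolding cover_prob_def measure_def E[unfolded K_def] using nn by simp
qed



lemma Hf_L: "Hf s0 s1 \<alpha> \<Delta> L u = L + Hf s0 s1 \<alpha> \<Delta> 0 u"
  unfolding Hf_def by simp

lemma cq_pos: "0 < \<alpha> \<Longrightarrow> \<alpha> < 1 \<Longrightarrow> cq (\<alpha> / 2) > 0"
  using cq_props(2)[of "\<alpha> / 2"] by simp

lemma Hf_anti:
  assumes s0: "s0 > 0" and s1: "s1 > 0" and c: "cq (\<alpha> / 2) \<ge> 0" and D: "\<Delta>1 \<le> \<Delta>2"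
  shows "Hf s0 s1 \<alpha> \<Delta>2 L u \<le> Hf s0 s1 \<alpha> \<Delta>1 L u"
proof -
  define \<sigma> where "\<sigma> = sqrt (s0\<^sup>2 + s1\<^sup>2)"
  have sp: "\<sigma> > 0" unfolding \<sigma>_def using s0 by (simp add: add_pos_nonneg)
  have "clipf (\<sigma> * cq (\<alpha> / 2)) (\<Delta>1 + \<sigma> * u) \<le> clipf (\<sigma> * cq (\<alpha> / 2)) (\<Delta>2 + \<sigma> * u)"
    using sp c D by (intro clipf_mono) auto
  then have "s0 * (clipf (\<sigma> * cq (\<alpha> / 2)) (\<Delta>1 + \<sigma> * u) - \<sigma> * u) / (\<sigma> * s1)
     \<le> s0 * (clipf (\<sigma> * cq (\<alpha> / 2)) (\<Delta>2 + \<sigma> * u) - \<sigma> * u) / (\<sigma> * s1)"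
    using s0 s1 sp by (intro divide_right_mono mult_left_mono) auto
  then show ?thesis unfolding Hf_def \<sigma>_def[symmetric] by simp
qed

lemma cover_mono_Delta:
  assumes s0: "s0 > 0" and s1: "s1 > 0" and c: "cq (\<alpha> / 2) \<ge> 0" and D: "\<Delta>1 \<le> \<Delta>2"
  shows "cover_prob s0 s1 \<alpha> \<tau> \<Delta>2 L \<le> cover_prob s0 s1 \<alpha> \<tau> \<Delta>1 L"
  unfolding cover_repr[OF s0 s1]
  by (rule Bochner_Integration.integral_mono)
    (auto intro!: integrable_phiPhi mult_left_mono Phi_mono Hf_anti[OF s0 s1 c D])

lemma cover_strict_L:
  assumes s0: "s0 > 0" and s1: "s1 > 0" and L: "L1 < L2"
  shows "cover_prob s0 s1 \<alpha> \<tau> \<Delta> L1 < cover_prob s0 s1 \<alpha> \<tau> \<Delta> L2"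
proof -
  define g where "g u = std_normal_density u * Phi (Hf s0 s1 \<alpha> \<Delta> L2 u) - std_normal_density u * Phi (Hf s0 s1 \<alpha> \<Delta> L1 u)" for u
  have pos: "g u > 0" for u
  proof -
    have "Hf s0 s1 \<alpha> \<Delta> L1 u < Hf s0 s1 \<alpha> \<Delta> L2 u"
      using L by (simp add: Hf_def)
    then have "Phi (Hf s0 s1 \<alpha> \<Delta> L1 u) < Phi (Hf s0 s1 \<alpha> \<Delta> L2 u)" by (rule Phi_strict)
    then show ?thesis unfolding g_def using std_normal_density_pos[of u]
      by (simp add: right_diff_distrib[symmetric])
  qed
  have ig: "integrable lborel g" unfolding g_def by (intro Bochner_Integration.integrable_diff integrable_phiPhi) auto
  have "integral\<^sup>L lborel g \<noteq> 0"
  proof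
    assume "integral\<^sup>L lborel g = 0"
    then have "AE x in lborel. g x = 0"
      using integral_nonneg_eq_0_iff_AE[OF ig] pos by (simp add: less_imp_le)
    moreover have "AE x in lborel. g x = 0 \<longrightarrow> False"
      using pos by (intro AE_I2) (metis less_irrefl)
    ultimately have "AE (x::real) in lborel. False" by (rule AE_mp)
    then have "ae_filter (lborel::real measure) = bot" using trivial_limit_def by blast
    then show False by (simp add: ae_filter_eq_bot_iff)
  qed
  moreover have "integral\<^sup>L lborel g \<ge> 0"
    using pos by (intro Bochner_Integration.integral_nonneg) (simp add: less_imp_le)
  moreover have "integral\<^sup>L lborel g = cover_prob s0 s1 \<alpha> \<tau> \<Delta> L2 - cover_prob s0 s1 \<alpha> \<tau> \<Delta> L1"
    unfolding cover_repr[OF s0 s1] g_def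
    by (rule Bochner_Integration.integral_diff) (auto intro!: integrable_phiPhi)
  ultimately show ?thesis by simp
qed

lemma cover_lip_L:
  assumes s0: "s0 > 0" and s1: "s1 > 0"
  shows "\<bar>cover_prob s0 s1 \<alpha> \<tau> \<Delta> L1 - cover_prob s0 s1 \<alpha> \<tau> \<Delta> L2\<bar> \<le> \<bar>L1 - L2\<bar>"
proof -
  define g where "g u = std_normal_density u * Phi (Hf s0 s1 \<alpha> \<Delta> L1 u) - std_normal_density u * Phi (Hf s0 s1 \<alpha> \<Delta> L2 u)" for u
  have ig: "integrable lborel g" unfolding g_def by (intro Bochner_Integration.integrable_diff integrable_phiPhi) auto
  have eq: "integral\<^sup>L lborel g = cover_prob s0 s1 \<alpha> \<tau> \<Delta> L1 - cover_prob s0 s1 \<alpha> \<tau> \<Delta> L2"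
    unfolding cover_repr[OF s0 s1] g_def
    by (rule Bochner_Integration.integral_diff) (auto intro!: integrable_phiPhi)
  have b: "\<bar>g u\<bar> \<le> std_normal_density u * \<bar>L1 - L2\<bar>" for u
  proof -
    have "\<bar>Phi (Hf s0 s1 \<alpha> \<Delta> L1 u) - Phi (Hf s0 s1 \<alpha> \<Delta> L2 u)\<bar> \<le> \<bar>L1 - L2\<bar>"
    proof -
      have "Hf s0 s1 \<alpha> \<Delta> L1 u - Hf s0 s1 \<alpha> \<Delta> L2 u = L1 - L2" by (simp add: Hf_def)
      then show ?thesis
        using Phi_lip[of "Hf s0 s1 \<alpha> \<Delta> L1 u" "Hf s0 s1 \<alpha> \<Delta> L2 u"] by (simp add: abs_minus_commute)
    qed
    then show ?thesis unfolding g_def right_diff_distrib[symmetric] abs_mult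
      using std_normal_density_pos[of u] by (simp add: mult_left_mono)
  qed
  have "\<bar>integral\<^sup>L lborel g\<bar> \<le> integral\<^sup>L lborel (\<lambda>u. std_normal_density u * \<bar>L1 - L2\<bar>)"
    using b by (intro integral_abs_bound_integral ig) auto
  also have "\<dots> = \<bar>L1 - L2\<bar>" by simp
  finally show ?thesis using eq by simp
qed

lemma cover_cont_L:
  assumes s0: "s0 > 0" and s1: "s1 > 0"
  shows "isCont (cover_prob s0 s1 \<alpha> \<tau> \<Delta>) L"
  unfolding isCont_def
proof (rule LIM_I)
  fix e :: real assume e: "0 < e"
  show "\<exists>d>0. \<forall>y. y \<noteq> L \<and> norm (y - L) < d \<longrightarrow> norm (cover_prob s0 s1 \<alpha> \<tau> \<Delta> y - cover_prob s0 s1 \<alpha> \<tau> \<Delta> L) < e"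
  proof (intro exI conjI allI impI)
    show "0 < e" by (rule e)
    fix y assume "y \<noteq> L \<and> norm (y - L) < e"
    then show "norm (cover_prob s0 s1 \<alpha> \<tau> \<Delta> y - cover_prob s0 s1 \<alpha> \<tau> \<Delta> L) < e"
      using cover_lip_L[OF s0 s1, of \<alpha> \<tau> \<Delta> y L] by simp
  qed
qed

lemma cover_prob_L:
  assumes s0: "s0 > 0" and s1: "s1 > 0"
  shows "cover_prob s0 s1 \<alpha> \<tau> \<Delta> L = (\<integral>u. std_normal_density u * Phi (L + Hf s0 s1 \<alpha> \<Delta> 0 u) \<partial>lborel)"
  unfolding cover_repr[OF s0 s1] Hf_def by simp

lemma cover_prob_fun:
  assumes s0: "s0 > 0" and s1: "s1 > 0"
  shows "cover_prob s0 s1 \<alpha> \<tau> \<Delta> = (\<lambda>t. \<integral>u. std_normal_density u * Phi (t + Hf s0 s1 \<alpha> \<Delta> 0 u) \<partial>lborel)"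
  by (rule ext) (rule cover_prob_L[OF s0 s1])

lemma cover_top:
  assumes s0: "s0 > 0" and s1: "s1 > 0"
  shows "(cover_prob s0 s1 \<alpha> \<tau> \<Delta> \<longlongrightarrow> 1) at_top"
proof -
  have "((\<lambda>t. integral\<^sup>L lborel (\<lambda>u. std_normal_density u * Phi (t + Hf s0 s1 \<alpha> \<Delta> 0 u)))
      \<longlongrightarrow> integral\<^sup>L lborel (\<lambda>u. std_normal_density u)) at_top"
  proof (rule integral_dominated_convergence_at_top[where w=std_normal_density])
    show "AE x in lborel. ((\<lambda>t. std_normal_density x * Phi (t + Hf s0 s1 \<alpha> \<Delta> 0 x)) \<longlongrightarrow> std_normal_density x) at_top"
    proof (intro AE_I2)
      fix x
      show "((\<lambda>t. std_normal_density x * Phi (t + Hf s0 s1 \<alpha> \<Delta> 0 x)) \<longlongrightarrow> std_normal_density x) at_top"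
      proof -
        have "filterlim (\<lambda>t. Hf s0 s1 \<alpha> \<Delta> 0 x + t) at_top at_top"
          by (rule filterlim_tendsto_add_at_top[OF tendsto_const filterlim_ident])
        then have "filterlim (\<lambda>t. t + Hf s0 s1 \<alpha> \<Delta> 0 x) at_top at_top"
          by (simp add: add.commute)
        then have "((\<lambda>t. Phi (t + Hf s0 s1 \<alpha> \<Delta> 0 x)) \<longlongrightarrow> 1) at_top"
          by (rule filterlim_compose[OF Phi_top])
        from tendsto_mult_left[OF this, of "std_normal_density x"] show ?thesis by simp
      qed
    qed
    show "\<forall>\<^sub>F i in at_top. AE x in lborel. norm (std_normal_density x * Phi (i + Hf s0 s1 \<alpha> \<Delta> 0 x)) \<le> std_normal_density x"
      by (intro always_eventually allI AE_I2) (simp add: abs_mult abs_of_nonneg Phi_nonneg mult_left_le Phi_le1)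
  qed auto
  then show ?thesis
    using cover_prob_fun[OF s0 s1] by simp
qed

lemma cover_bot:
  assumes s0: "s0 > 0" and s1: "s1 > 0"
  shows "((\<lambda>t. cover_prob s0 s1 \<alpha> \<tau> \<Delta> (- t)) \<longlongrightarrow> 0) at_top"
proof -
  have "((\<lambda>t. integral\<^sup>L lborel (\<lambda>u. std_normal_density u * Phi (- t + Hf s0 s1 \<alpha> \<Delta> 0 u)))
      \<longlongrightarrow> integral\<^sup>L lborel (\<lambda>u::real. 0::real)) at_top"
  proof (rule integral_dominated_convergence_at_top[where w=std_normal_density and f="\<lambda>u::real. 0::real"
      and s="\<lambda>t u. std_normal_density u * Phi (- t + Hf s0 s1 \<alpha> \<Delta> 0 u)"])
    show "AE x in lborel. ((\<lambda>t. std_normal_density x * Phi (- t + Hf s0 s1 \<alpha> \<Delta> 0 x)) \<longlongrightarrow> 0) at_top"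
    proof (intro AE_I2)
      fix x
      show "((\<lambda>t. std_normal_density x * Phi (- t + Hf s0 s1 \<alpha> \<Delta> 0 x)) \<longlongrightarrow> 0) at_top"
      proof -
        have "filterlim (\<lambda>t. Hf s0 s1 \<alpha> \<Delta> 0 x + - t) at_bot at_top"
          using filterlim_tendsto_add_at_bot_iff[OF tendsto_const, where g="\<lambda>t::real. - t" and F=at_top and c="Hf s0 s1 \<alpha> \<Delta> 0 x"]
            filterlim_uminus_at_bot_at_top by simp
        then have "filterlim (\<lambda>t. - t + Hf s0 s1 \<alpha> \<Delta> 0 x) at_bot at_top"
          by (simp add: add.commute)
        then have "((\<lambda>t. Phi (- t + Hf s0 s1 \<alpha> \<Delta> 0 x)) \<longlongrightarrow> 0) at_top"
          by (rule filterlim_compose[OF Phi_bot])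
        from tendsto_mult_left[OF this, of "std_normal_density x"] show ?thesis by simp
      qed
    qed
    show "\<forall>\<^sub>F i in at_top. AE x in lborel. norm (std_normal_density x * Phi (- i + Hf s0 s1 \<alpha> \<Delta> 0 x)) \<le> std_normal_density x"
      by (intro always_eventually allI AE_I2) (simp add: abs_mult abs_of_nonneg Phi_nonneg mult_left_le Phi_le1)
  qed auto
  then show ?thesis
    using cover_prob_fun[OF s0 s1] by simp
qed



lemma clipf_low: "0 \<le> r \<Longrightarrow> d \<le> - r \<Longrightarrow> clipf r d = - r"
  unfolding clipf_def by (auto simp: sgn_if)

lemma clipf_high: "0 \<le> r \<Longrightarrow> d \<ge> r \<Longrightarrow> clipf r d = r"
  unfolding clipf_def by (auto simp: sgn_if)

lemma clipf_mid: "\<bar>d\<bar> \<le> r \<Longrightarrow> clipf r d = d"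
  unfolding clipf_def by auto

lemma SND_single: "measure SND {y} = 0"
proof -
  interpret fb: finite_borel_measure SND
    using real_distribution.finite_borel_measure_M[OF real_dist_SND] .
  show ?thesis using fb.isCont_cdf[of y] Phi_cont[of y] by (simp add: Phi_cdf)
qed

lemma int_ind_phi:
  assumes "p < q"
  shows "(\<integral>u. indicator {p<..<q} u * std_normal_density u \<partial>lborel) = Phi q - Phi p"
proof -
  interpret fb: finite_borel_measure SND
    using real_distribution.finite_borel_measure_M[OF real_dist_SND] .
  have "(\<integral>u. indicator {p<..<q} u * std_normal_density u \<partial>lborel) = integral\<^sup>L SND (indicator {p<..<q})"
    by (subst integral_density) (auto simp: mult.commute)
  also have "\<dots> = measure SND {p<..<q}" by simp
  also have "measure SND {p<..q} = measure SND {p<..<q} + measure SND {q}"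
  proof -
    have u1: "{p<..q} = {p<..<q} \<union> {q}" using assms by auto
    show ?thesis unfolding u1 by (rule fb.finite_measure_Union) auto
  qed
  then have "measure SND {p<..<q} = measure SND {p<..q}" using SND_single by simp
  also have "\<dots> = Phi q - Phi p" using Phi_diff[of p q] assms by simp
  finally show ?thesis .
qed

lemma Hf_regions:
  assumes s0: "s0 > 0" and s1: "s1 > 0" and c: "cq (\<alpha> / 2) > 0"
  defines "\<sigma> \<equiv> sqrt (s0\<^sup>2 + s1\<^sup>2)"
  defines "k \<equiv> s0 / (sqrt (s0\<^sup>2 + s1\<^sup>2) * s1)"
  shows "\<Delta> + \<sigma> * u \<le> - (\<sigma> * cq (\<alpha> / 2)) \<Longrightarrow> Hf s0 s1 \<alpha> \<Delta> L u = L + k * \<sigma> * (u + cq (\<alpha> / 2))"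
    and "\<bar>\<Delta> + \<sigma> * u\<bar> \<le> \<sigma> * cq (\<alpha> / 2) \<Longrightarrow> Hf s0 s1 \<alpha> \<Delta> L u = L - k * \<Delta>"
    and "\<Delta> + \<sigma> * u \<ge> \<sigma> * cq (\<alpha> / 2) \<Longrightarrow> Hf s0 s1 \<alpha> \<Delta> L u = L + k * \<sigma> * (u - cq (\<alpha> / 2))"
proof -
  have sp: "\<sigma> > 0" unfolding \<sigma>_def using s0 by (simp add: add_pos_nonneg)
  have r: "0 \<le> \<sigma> * cq (\<alpha> / 2)" using sp c by simp
  show "\<Delta> + \<sigma> * u \<le> - (\<sigma> * cq (\<alpha> / 2)) \<Longrightarrow> Hf s0 s1 \<alpha> \<Delta> L u = L + k * \<sigma> * (u + cq (\<alpha> / 2))"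
    unfolding Hf_def unfolding k_def[symmetric] unfolding \<sigma>_def[symmetric] using clipf_low[OF r]
    by (simp add: algebra_simps)
  show "\<bar>\<Delta> + \<sigma> * u\<bar> \<le> \<sigma> * cq (\<alpha> / 2) \<Longrightarrow> Hf s0 s1 \<alpha> \<Delta> L u = L - k * \<Delta>"
    unfolding Hf_def unfolding k_def[symmetric] unfolding \<sigma>_def[symmetric] using clipf_mid
    by (simp add: algebra_simps)
  show "\<Delta> + \<sigma> * u \<ge> \<sigma> * cq (\<alpha> / 2) \<Longrightarrow> Hf s0 s1 \<alpha> \<Delta> L u = L + k * \<sigma> * (u - cq (\<alpha> / 2))"
    unfolding Hf_def unfolding k_def[symmetric] unfolding \<sigma>_def[symmetric] using clipf_high[OF r]
    by (simp add: algebra_simps)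
qed

lemma cover_formula:
  assumes s0: "s0 > 0" and s1: "s1 > 0" and cpos: "cq (\<alpha> / 2) > 0"
  defines "\<gamma> \<equiv> s0\<^sup>2 / s1\<^sup>2"
  defines "c \<equiv> cq (\<alpha> / 2)"
  shows "cover_prob s0 s1 \<alpha> \<tau> (t * s0) L =
        (Phi (c - sqrt (\<gamma> / (1 + \<gamma>)) * t) - Phi (- c - sqrt (\<gamma> / (1 + \<gamma>)) * t))
          * Phi (L - \<gamma> / sqrt (1 + \<gamma>) * t)
        + (LINT u:{.. - c - sqrt (\<gamma> / (1 + \<gamma>)) * t}|lborel. Phi (L + sqrt \<gamma> * (u + c)) * phi u)
        + (LINT u:{c - sqrt (\<gamma> / (1 + \<gamma>)) * t ..}|lborel. Phi (L + sqrt \<gamma> * (u - c)) * phi u)"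
proof -
  define \<sigma> where "\<sigma> = sqrt (s0\<^sup>2 + s1\<^sup>2)"
  define k where "k = s0 / (sqrt (s0\<^sup>2 + s1\<^sup>2) * s1)"
  define a where "a = sqrt (\<gamma> / (1 + \<gamma>)) * t"
  define \<Delta> where "\<Delta> = t * s0"
  have sp: "\<sigma> > 0" unfolding \<sigma>_def using s0 by (simp add: add_pos_nonneg)
  have S2: "\<sigma>\<^sup>2 = s0\<^sup>2 + s1\<^sup>2" unfolding \<sigma>_def by simp
  have sq1: "sqrt (\<gamma> / (1 + \<gamma>)) = s0 / \<sigma>"
  proof -
    have "\<gamma> / (1 + \<gamma>) = (s0 / \<sigma>)\<^sup>2" unfolding \<gamma>_def power_divide S2 using s1
      by (simp add: field_simps)
    then show ?thesis using s0 sp by simp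
  qed
  have sq2: "sqrt \<gamma> = s0 / s1" unfolding \<gamma>_def using s0 s1 by (simp add: real_sqrt_divide)
  have sq3: "sqrt (1 + \<gamma>) = \<sigma> / s1"
  proof -
    have "1 + \<gamma> = (\<sigma> / s1)\<^sup>2" unfolding \<gamma>_def power_divide S2 using s1 by (simp add: field_simps)
    then show ?thesis using sp s1 by simp
  qed
  have sa: "\<sigma> * a = \<Delta>" unfolding a_def sq1 \<Delta>_def using sp by simp
  have ks: "k * \<sigma> = sqrt \<gamma>" unfolding k_def \<sigma>_def[symmetric] sq2 using sp by simp
  have kD: "k * \<Delta> = \<gamma> / sqrt (1 + \<gamma>) * t" unfolding sq3 unfolding k_def \<sigma>_def[symmetric] \<Delta>_def \<gamma>_def
    using sp s1 by (simp add: field_simps power2_eq_square)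
  define f where "f u = std_normal_density u * Phi (Hf s0 s1 \<alpha> \<Delta> L u)" for u
  define A1 where "A1 = {.. - c - a}"
  define A2 where "A2 = {- c - a <..< c - a}"
  define A3 where "A3 = {c - a ..}"
  have c0: "c > 0" using cpos c_def by simp
  have fi: "integrable lborel f" unfolding f_def by (rule integrable_phiPhi) simp
  have split: "f u = indicator A1 u * f u + indicator A2 u * f u + indicator A3 u * f u" for u
    using c0 unfolding A1_def A2_def A3_def by (auto simp: indicator_def)
  have R1: "u \<in> A1 \<Longrightarrow> f u = Phi (L + sqrt \<gamma> * (u + c)) * phi u" for u
  proof -
    assume "u \<in> A1"
    then have "u \<le> - c - a" unfolding A1_def by simp
    then have "\<sigma> * u \<le> \<sigma> * (- c - a)" using sp by (simp add: mult_left_mono)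
    then have "\<Delta> + \<sigma> * u \<le> - (\<sigma> * c)" using sa by (simp add: algebra_simps)
    from Hf_regions(1)[OF s0 s1 cpos, folded \<sigma>_def k_def, OF this[unfolded c_def]]
    show ?thesis unfolding f_def phi_def c_def[symmetric] using ks by (simp add: mult.commute)
  qed
  have R3: "u \<in> A3 \<Longrightarrow> f u = Phi (L + sqrt \<gamma> * (u - c)) * phi u" for u
  proof -
    assume "u \<in> A3"
    then have "u \<ge> c - a" unfolding A3_def by simp
    then have "\<sigma> * u \<ge> \<sigma> * (c - a)" using sp by (simp add: mult_left_mono)
    then have "\<Delta> + \<sigma> * u \<ge> \<sigma> * c" using sa by (simp add: algebra_simps)
    from Hf_regions(3)[OF s0 s1 cpos, folded \<sigma>_def k_def, OF this[unfolded c_def]]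
    show ?thesis unfolding f_def phi_def c_def[symmetric] using ks by (simp add: mult.commute)
  qed
  have R2: "u \<in> A2 \<Longrightarrow> f u = Phi (L - \<gamma> / sqrt (1 + \<gamma>) * t) * std_normal_density u" for u
  proof -
    assume "u \<in> A2"
    then have "- c - a < u" "u < c - a" unfolding A2_def by auto
    then have "\<sigma> * (- c - a) < \<sigma> * u" "\<sigma> * u < \<sigma> * (c - a)" using sp by auto
    then have "\<bar>\<Delta> + \<sigma> * u\<bar> \<le> \<sigma> * c" using sa by (simp add: algebra_simps abs_le_iff)
    from Hf_regions(2)[OF s0 s1 cpos, folded \<sigma>_def k_def, OF this[unfolded c_def]]
    show ?thesis unfolding f_def using kD by (simp add: mult.commute)
  qed
  have i1: "integrable lborel (\<lambda>u. indicator A1 u * f u)"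
    using integrable_real_mult_indicator[OF _ fi, of A1] unfolding A1_def by (simp add: mult.commute)
  have i2: "integrable lborel (\<lambda>u. indicator A2 u * f u)"
    using integrable_real_mult_indicator[OF _ fi, of A2] unfolding A2_def by (simp add: mult.commute)
  have i3: "integrable lborel (\<lambda>u. indicator A3 u * f u)"
    using integrable_real_mult_indicator[OF _ fi, of A3] unfolding A3_def by (simp add: mult.commute)
  have "integral\<^sup>L lborel f = (\<integral>u. indicator A1 u * f u + indicator A2 u * f u + indicator A3 u * f u \<partial>lborel)"
    by (rule arg_cong[where f="integral\<^sup>L lborel"]) (rule ext, rule split)
  also have "\<dots> = (\<integral>u. indicator A1 u * f u \<partial>lborel) + (\<integral>u. indicator A2 u * f u \<partial>lborel) + (\<integral>u. indicator A3 u * f u \<partial>lborel)"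
    using i1 i2 i3 by (simp add: Bochner_Integration.integral_add)
  also have "(\<integral>u. indicator A1 u * f u \<partial>lborel) = (LINT u:A1|lborel. Phi (L + sqrt \<gamma> * (u + c)) * phi u)"
    unfolding set_lebesgue_integral_def
    by (intro Bochner_Integration.integral_cong refl) (auto simp: indicator_def R1)
  also have "(\<integral>u. indicator A3 u * f u \<partial>lborel) = (LINT u:A3|lborel. Phi (L + sqrt \<gamma> * (u - c)) * phi u)"
    unfolding set_lebesgue_integral_def
    by (intro Bochner_Integration.integral_cong refl) (auto simp: indicator_def R3)
  also have "(\<integral>u. indicator A2 u * f u \<partial>lborel)
      = (\<integral>u. Phi (L - \<gamma> / sqrt (1 + \<gamma>) * t) * (indicator A2 u * std_normal_density u) \<partial>lborel)"
    by (intro Bochner_Integration.integral_cong refl) (auto simp: indicator_def R2)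
  also have "\<dots> = Phi (L - \<gamma> / sqrt (1 + \<gamma>) * t) * (Phi (c - a) - Phi (- c - a))"
    unfolding A2_def using c0 by (subst integral_mult_right_zero) (simp add: int_ind_phi)
  finally have "integral\<^sup>L lborel f = (LINT u:A1|lborel. Phi (L + sqrt \<gamma> * (u + c)) * phi u)
      + Phi (L - \<gamma> / sqrt (1 + \<gamma>) * t) * (Phi (c - a) - Phi (- c - a))
      + (LINT u:A3|lborel. Phi (L + sqrt \<gamma> * (u - c)) * phi u)" .
  moreover have "cover_prob s0 s1 \<alpha> \<tau> (t * s0) L = integral\<^sup>L lborel f"
    unfolding f_def \<Delta>_def by (rule cover_repr[OF s0 s1])
  ultimately show ?thesis unfolding A1_def A3_def a_def by (simp add: algebra_simps)
qed


theorem theorem15: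
  fixes s0 s1 \<alpha> \<zeta> b \<tau> :: real
  assumes "s0 > 0" and "s1 > 0"
    and "0 < \<alpha>" and "\<alpha> < 1" and "0 < \<zeta>" and "\<zeta> < 1" and "b \<ge> 0"
  defines "\<gamma> \<equiv> s0\<^sup>2 / s1\<^sup>2"
  defines "c \<equiv> cq (\<alpha> / 2)"
  shows
    "(\<forall>L > 0. \<forall>\<Delta>1 \<Delta>2. \<Delta>1 \<le> \<Delta>2 \<longrightarrow>
        cover_prob s0 s1 \<alpha> \<tau> \<Delta>2 L \<le> cover_prob s0 s1 \<alpha> \<tau> \<Delta>1 L)
   \<and> (\<forall>t L. cover_prob s0 s1 \<alpha> \<tau> (t * s0) L =
        (Phi (c - sqrt (\<gamma> / (1 + \<gamma>)) * t) - Phi (- c - sqrt (\<gamma> / (1 + \<gamma>)) * t))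
          * Phi (L - \<gamma> / sqrt (1 + \<gamma>) * t)
        + (LINT u:{.. - c - sqrt (\<gamma> / (1 + \<gamma>)) * t}|lborel. Phi (L + sqrt \<gamma> * (u + c)) * phi u)
        + (LINT u:{c - sqrt (\<gamma> / (1 + \<gamma>)) * t ..}|lborel. Phi (L + sqrt \<gamma> * (u - c)) * phi u))
   \<and> (\<exists>!L'. cover_prob s0 s1 \<alpha> \<tau> (b * s0) L' = 1 - \<zeta>)
   \<and> (\<forall>L'. cover_prob s0 s1 \<alpha> \<tau> (b * s0) L' = 1 - \<zeta> \<longrightarrow>
        (\<forall>\<Delta>. \<bar>\<Delta> / s0\<bar> \<le> b \<longrightarrow> cover_prob s0 s1 \<alpha> \<tau> \<Delta> L' \<ge> 1 - \<zeta>)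
      \<and> (\<forall>L. (\<forall>\<Delta>. \<bar>\<Delta> / s0\<bar> \<le> b \<longrightarrow> cover_prob s0 s1 \<alpha> \<tau> \<Delta> L \<ge> 1 - \<zeta>) \<longrightarrow> L' \<le> L))"
proof -
  have s0: "s0 > 0" and s1: "s1 > 0" using assms by auto
  have cpos: "cq (\<alpha> / 2) > 0" using assms by (intro cq_pos) auto
  have c0: "cq (\<alpha> / 2) \<ge> 0" using cpos by simp
  define F where "F = cover_prob s0 s1 \<alpha> \<tau> (b * s0)"
  have P1: "\<forall>L > 0. \<forall>\<Delta>1 \<Delta>2. \<Delta>1 \<le> \<Delta>2 \<longrightarrow>
        cover_prob s0 s1 \<alpha> \<tau> \<Delta>2 L \<le> cover_prob s0 s1 \<alpha> \<tau> \<Delta>1 L"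
    using cover_mono_Delta[OF s0 s1 c0] by blast
  have P2: "\<forall>t L. cover_prob s0 s1 \<alpha> \<tau> (t * s0) L =
        (Phi (c - sqrt (\<gamma> / (1 + \<gamma>)) * t) - Phi (- c - sqrt (\<gamma> / (1 + \<gamma>)) * t))
          * Phi (L - \<gamma> / sqrt (1 + \<gamma>) * t)
        + (LINT u:{.. - c - sqrt (\<gamma> / (1 + \<gamma>)) * t}|lborel. Phi (L + sqrt \<gamma> * (u + c)) * phi u)
        + (LINT u:{c - sqrt (\<gamma> / (1 + \<gamma>)) * t ..}|lborel. Phi (L + sqrt \<gamma> * (u - c)) * phi u)"
    unfolding \<gamma>_def c_def by (intro allI) (rule cover_formula[OF s0 s1 cpos])
  have strict: "L1 < L2 \<Longrightarrow> F L1 < F L2" for L1 L2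
    unfolding F_def by (rule cover_strict_L[OF s0 s1])
  have ex: "\<exists>L'. F L' = 1 - \<zeta>"
  proof -
    have "\<forall>\<^sub>F x in at_top. 1 - \<zeta> < F x"
      using order_tendstoD(1)[OF cover_top[OF s0 s1]] assms unfolding F_def by simp
    then obtain N1 where N1: "\<And>x. x \<ge> N1 \<Longrightarrow> 1 - \<zeta> < F x"
      by (auto simp: eventually_at_top_linorder)
    have "\<forall>\<^sub>F x in at_top. F (- x) < 1 - \<zeta>"
      using order_tendstoD(2)[OF cover_bot[OF s0 s1]] assms unfolding F_def by simp
    then obtain N2 where N2: "\<And>x. x \<ge> N2 \<Longrightarrow> F (- x) < 1 - \<zeta>"
      by (auto simp: eventually_at_top_linorder)
    define hi where "hi = max N1 0"
    define lo where "lo = - max N2 0"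
    have "F lo \<le> 1 - \<zeta>" using N2[of "max N2 0"] unfolding lo_def by simp
    moreover have "1 - \<zeta> \<le> F hi" using N1[of hi] unfolding hi_def by simp
    moreover have "lo \<le> hi" unfolding lo_def hi_def by simp
    moreover have "\<forall>x. lo \<le> x \<and> x \<le> hi \<longrightarrow> isCont F x"
      unfolding F_def using cover_cont_L[OF s0 s1] by blast
    ultimately have "\<exists>x. lo \<le> x \<and> x \<le> hi \<and> F x = 1 - \<zeta>" by (rule IVT)
    then show ?thesis by blast
  qed
  have P3: "\<exists>!L'. F L' = 1 - \<zeta>"
  proof -
    from ex obtain L' where L': "F L' = 1 - \<zeta>" by blast
    show ?thesis
    proof (rule ex1I[of _ L'])
      show "F L' = 1 - \<zeta>" by (rule L')
      fix y assume y: "F y = 1 - \<zeta>"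
      show "y = L'"
      proof (rule ccontr)
        assume "y \<noteq> L'"
        then have "y < L' \<or> L' < y" by auto
        then show False using strict[of y L'] strict[of L' y] y L' by auto
      qed
    qed
  qed
  have P4: "\<forall>L'. F L' = 1 - \<zeta> \<longrightarrow>
        (\<forall>\<Delta>. \<bar>\<Delta> / s0\<bar> \<le> b \<longrightarrow> cover_prob s0 s1 \<alpha> \<tau> \<Delta> L' \<ge> 1 - \<zeta>)
      \<and> (\<forall>L. (\<forall>\<Delta>. \<bar>\<Delta> / s0\<bar> \<le> b \<longrightarrow> cover_prob s0 s1 \<alpha> \<tau> \<Delta> L \<ge> 1 - \<zeta>) \<longrightarrow> L' \<le> L)"
  proof (intro allI impI conjI)
    fix L' assume L': "F L' = 1 - \<zeta>"
    fix \<Delta> assume D: "\<bar>\<Delta> / s0\<bar> \<le> b"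
    then have "\<Delta> / s0 \<le> b" using abs_ge_self[of "\<Delta> / s0"] by linarith
    then have "\<Delta> \<le> b * s0" using s0 by (simp add: divide_le_eq)
    then have "cover_prob s0 s1 \<alpha> \<tau> (b * s0) L' \<le> cover_prob s0 s1 \<alpha> \<tau> \<Delta> L'"
      by (rule cover_mono_Delta[OF s0 s1 c0])
    then show "cover_prob s0 s1 \<alpha> \<tau> \<Delta> L' \<ge> 1 - \<zeta>" using L' unfolding F_def by simp
  next
    fix L' L assume L': "F L' = 1 - \<zeta>"
      and H: "\<forall>\<Delta>. \<bar>\<Delta> / s0\<bar> \<le> b \<longrightarrow> cover_prob s0 s1 \<alpha> \<tau> \<Delta> L \<ge> 1 - \<zeta>"
    have "\<bar>(b * s0) / s0\<bar> \<le> b" using s0 assms by simp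
    then have "F L \<ge> 1 - \<zeta>" using H unfolding F_def by blast
    show "L' \<le> L"
    proof (rule ccontr)
      assume "\<not> L' \<le> L"
      then have "F L < F L'" by (intro strict) simp
      then show False using L' \<open>F L \<ge> 1 - \<zeta>\<close> by simp
    qed
  qed
  show ?thesis using P1 P2 P3 P4 unfolding F_def by blast
qed

end
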